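(* Let $M\ge1$, $N\ge0$, let $\{m\}=(m_0,\dots,m_{M-1})$ with $\sum m_k=N+1$ and $\{n\}=(n_0,\dots,n_{M-1})$ with $\sum n_k=N$ be tuples of nonnegative integers with associated partitions $\mu$ ($N+1$ parts) and $\lambda$ ($N$ parts). For nonzero $v\in\mathbb{C}$ with $v^{-2}\neq\beta$, put $z=(v^{-2}-\beta)^{-1}$. Then $$\langle\{m\}|(v^{-1}-\beta v)^{1-M}\mathcal{B}(v)|\{n\}\rangle=G_{\mu/\lambda}(z;\beta),\qquad \langle\{n\}|(v^{-1}-\beta v)^{1-M}\mathcal{C}(v)|\{m\}\rangle=G_{\mu^\vee/\lambda^\vee}(z;\beta),$$ where $\lambda^\vee_j=M-1-\lambda_{N+1-j}$ ($1\le j\le N$) and $\mu^\vee_j=M-1-\mu_{N+2-j}$ ($1\le j\le N+1$).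
   Context: Non-Hermitian phase model: $\beta\in\mathbb{C}$ is a parameter. $\mathcal{F}$ is the bosonic Fock space with orthonormal basis $|n\rangle$, $n=0,1,2,\dots$; $\phi|n\rangle=|n-1\rangle$ ($\phi|0\rangle=0$), $\phi^\dagger|n\rangle=|n+1\rangle$, $\pi|n\rangle=\delta_{n,0}|n\rangle$. Sites are labelled $0,\dots,M-1$ with Fock spaces $\mathcal{F}_0,\dots,\mathcal{F}_{M-1}$; $\phi_j,\phi_j^\dagger,\pi_j$ act on $\mathcal{F}_j$. With $W_a=\mathbb{C}^2$, basis $|0\rangle_a,|1\rangle_a$, the $L$-operator on $W_a\otimes\mathcal{F}_j$ is $$\mathcal{L}_{aj}(v)=|0\rangle\langle0|_a\otimes(v^{-1}-\beta v\pi_j)+|0\rangle\langle1|_a\otimes\phi_j^\dagger+|1\rangle\langle0|_a\otimes\phi_j+|1\rangle\langle1|_a\otimes v,$$ i.e. the $2\times2$ matrix $\begin{pmatrix}v^{-1}-\beta v\pi_j&\phi_j^\dagger\\ \phi_j&v\end{pmatrix}$. The monodromy matrix is $\mathcal{T}_a(v)=\mathcal{L}_{a,M-1}(v)\cdots\mathcal{L}_{a,0}(v)=\begin{pmatrix}\mathcal{A}(v)&\mathcal{B}(v)\\ \mathcal{C}(v)&\mathcal{D}(v)\end{pmatrix}$, so $\mathcal{B}(v)={}_a\langle0|\mathcal{T}_a(v)|1\rangle_a$, $\mathcal{C}(v)={}_a\langle1|\mathcal{T}_a(v)|0\rangle_a$. For $\{n\}=(n_0,\dots,n_{M-1})$,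 $|\{n\}\rangle=\otimes_{j=0}^{M-1}|n_j\rangle_j$ and $\langle\{n\}|$ its dual. The partition associated with $\{n\}$ (with $\sum n_k=N$) is the weakly decreasing length-$N$ sequence $\lambda=((M-1)^{n_{M-1}},\dots,1^{n_1},0^{n_0})$. For $\mu$ with $N+1$ entries and $\lambda$ with $N$ entries, $|\lambda|=\sum\lambda_j$ and $G_{\mu/\lambda}(z;\beta)=z^{|\mu|-|\lambda|}\prod_{j=1}^N(1+\beta z-\beta z\,\delta_{\mu_{j+1},\lambda_j})$ if $\mu_j\ge\lambda_j\ge\mu_{j+1}$ for all $1\le j\le N$, and $0$ otherwise. *)

theory Defs
  imports Complex_Main
begin

text \<open>Single-site Fock space operators, given by their matrix elements
  <m| X |n> in the orthonormal basis |n>, n = 0,1,2,...\<close>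

definition phi_me :: "nat \<Rightarrow> nat \<Rightarrow> complex" where
  "phi_me m n = (if n = m + 1 then 1 else 0)"

definition phid_me :: "nat \<Rightarrow> nat \<Rightarrow> complex" where
  "phid_me m n = (if m = n + 1 then 1 else 0)"

definition pi_me :: "nat \<Rightarrow> nat \<Rightarrow> complex" where
  "pi_me m n = (if m = n \<and> n = 0 then 1 else 0)"

definition id_me :: "nat \<Rightarrow> nat \<Rightarrow> complex" where
  "id_me m n = (if m = n then 1 else 0)"

text \<open>Matrix elements <m| (L(v))_{a b} |n> of the entries of the L-operator;
  auxiliary indices a, b \<in> {0,1}.\<close>

definition L_me :: "complex \<Rightarrow> complex \<Rightarrow> nat \<Rightarrow> nat \<Rightarrow> nat \<Rightarrow> nat \<Rightarrow> complex" where
  "L_me \<beta> v a b m n =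
     (if a = 0 \<and> b = 0 then inverse v * id_me m n - \<beta> * v * pi_me m n
      else if a = 0 \<and> b = 1 then phid_me m n
      else if a = 1 \<and> b = 0 then phi_me m n
      else v * id_me m n)"

text \<open>Matrix elements of the partial monodromy matrix L_{k-1}(v) ... L_0(v)
  between product states <ms| and |ns> (site j has occupation ms!j, ns!j).
  Since the L-operators at different sites act on different tensor factors,
  <{m}| T_{ab} |{n}> = sum over internal auxiliary indices of products of
  single-site matrix elements.\<close>

fun mono_me :: "complex \<Rightarrow> complex \<Rightarrow> nat list \<Rightarrow> nat list \<Rightarrow> nat \<Rightarrow> nat \<Rightarrow> nat \<Rightarrow> complex" where
  "mono_me \<beta> v ms ns 0 a b = (if a = b then 1 else 0)"
| "mono_me \<beta> v ms ns (Suc k) a b =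
     (\<Sum>c\<in>{0,1}. L_me \<beta> v a c (ms ! k) (ns ! k) * mono_me \<beta> v ms ns k c b)"

definition B_me :: "complex \<Rightarrow> complex \<Rightarrow> nat list \<Rightarrow> nat list \<Rightarrow> complex" where
  "B_me \<beta> v ms ns = mono_me \<beta> v ms ns (length ms) 0 1"

definition C_me :: "complex \<Rightarrow> complex \<Rightarrow> nat list \<Rightarrow> nat list \<Rightarrow> complex" where
  "C_me \<beta> v ms ns = mono_me \<beta> v ms ns (length ms) 1 0"

text \<open>Partition associated with occupation numbers ns = (n_0,...,n_{M-1}):
  ((M-1)^{n_{M-1}}, ..., 1^{n_1}, 0^{n_0}); entry lambda_j is (partition ns) ! (j-1).\<close>

definition partition_of :: "nat list \<Rightarrow> nat list" where
  "partition_of ns = concat (map (\<lambda>k. replicate (ns ! k) k) (rev [0..<length ns]))"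

definition dual_part :: "nat \<Rightarrow> nat list \<Rightarrow> nat list" where
  "dual_part M lam = rev (map (\<lambda>x. M - 1 - x) lam)"

text \<open>G_{mu/lam}(z;beta), mu with N+1 entries, lam with N entries (1-indexed in the paper).\<close>

definition G_skew :: "nat list \<Rightarrow> nat list \<Rightarrow> complex \<Rightarrow> complex \<Rightarrow> complex" where
  "G_skew mu lam z \<beta> =
     (if (\<forall>j\<in>{1..length lam}. mu ! (j-1) \<ge> lam ! (j-1) \<and> lam ! (j-1) \<ge> mu ! j)
      then z powi (int (sum_list mu) - int (sum_list lam)) *
           (\<Prod>j=1..length lam. 1 + \<beta> * z - \<beta> * z * (if mu ! j = lam ! (j-1) then 1 else 0))
      else 0)"

end

theory Submission
  imports Defs
begin

lemma L_sym: "L_me \<beta> v a c m n = L_me \<beta> v c a n m"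
  by (auto simp: L_me_def id_me_def pi_me_def phi_me_def phid_me_def)

lemma mono_append:
  "k \<le> length ms \<Longrightarrow> k \<le> length ns \<Longrightarrow>
   mono_me \<beta> v (ms @ xs) (ns @ ys) k a b = mono_me \<beta> v ms ns k a b"
  by (induction k arbitrary: a) (auto simp: nth_append)

lemma mono_bot:
  assumes "a \<le> 1" "b \<le> 1"
  shows "mono_me \<beta> v (x # xs) (y # ys) (Suc k) a b =
     (\<Sum>c\<in>{0,1}. mono_me \<beta> v xs ys k a c * L_me \<beta> v c b x y)"
  using assms
proof (induction k arbitrary: a)
  case 0
  then show ?case by (cases a; cases b) auto
next
  case (Suc k)
  have "mono_me \<beta> v (x # xs) (y # ys) (Suc (Suc k)) a b =
     (\<Sum>c\<in>{0,1}. L_me \<beta> v a c (xs ! k) (ys ! k) * mono_me \<beta> v (x # xs) (y # ys) (Suc k) c b)"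
    by simp
  also have "\<dots> = (\<Sum>c\<in>{0,1}. L_me \<beta> v a c (xs ! k) (ys ! k) *
       (\<Sum>d\<in>{0,1}. mono_me \<beta> v xs ys k c d * L_me \<beta> v d b x y))"
    using Suc.IH[of 0] Suc.IH[of 1] Suc.prems by (simp del: mono_me.simps)
  also have "\<dots> = (\<Sum>d\<in>{0,1}. mono_me \<beta> v xs ys (Suc k) a d * L_me \<beta> v d b x y)"
    by (simp add: algebra_simps)
  finally show ?case .
qed

lemma mono_rev:
  "k \<le> length ms \<Longrightarrow> k \<le> length ns \<Longrightarrow> a \<le> 1 \<Longrightarrow> b \<le> 1 \<Longrightarrow>
   mono_me \<beta> v ns ms k a b = mono_me \<beta> v (rev (take k ms)) (rev (take k ns)) k b a"
proof (induction k arbitrary: a b)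
  case 0
  then show ?case by simp
next
  case (Suc k)
  have t1: "rev (take (Suc k) ms) = ms ! k # rev (take k ms)"
    using Suc.prems by (simp add: take_Suc_conv_app_nth)
  have t2: "rev (take (Suc k) ns) = ns ! k # rev (take k ns)"
    using Suc.prems by (simp add: take_Suc_conv_app_nth)
  have "mono_me \<beta> v ns ms (Suc k) a b =
     (\<Sum>c\<in>{0,1}. L_me \<beta> v a c (ns ! k) (ms ! k) * mono_me \<beta> v ns ms k c b)"
    by simp
  also have "\<dots> = (\<Sum>c\<in>{0,1}. mono_me \<beta> v (rev (take k ms)) (rev (take k ns)) k b c * L_me \<beta> v c a (ms ! k) (ns ! k))"
    using Suc.IH[of 0 b] Suc.IH[of 1 b] Suc.prems by (simp add: L_sym[of _ _ a])
  also have "\<dots> = mono_me \<beta> v (rev (take (Suc k) ms)) (rev (take (Suc k) ns)) (Suc k) b a"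
    unfolding t1 t2 using Suc.prems by (simp only: mono_bot)
  finally show ?case .
qed

lemma C_B: "length ns = length ms \<Longrightarrow> C_me \<beta> v ns ms = B_me \<beta> v (rev ms) (rev ns)"
  unfolding C_me_def B_me_def
  by (subst mono_rev) auto

lemma part_nil[simp]: "partition_of [] = []"
  by (simp add: partition_of_def)

lemma part_snoc: "partition_of (ms @ [m]) = replicate m (length ms) @ partition_of ms"
proof -
  have r: "rev [0..<Suc (length ms)] = length ms # rev [0..<length ms]" by simp
  have "map (\<lambda>k. replicate ((ms @ [m]) ! k) k) (rev [0..<length ms])
        = map (\<lambda>k. replicate (ms ! k) k) (rev [0..<length ms])"
    by (rule map_cong) (auto simp: nth_append)
  then show ?thesis
    unfolding partition_of_def by (simp only: length_append_singleton r list.map concat.simps) simp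
qed

lemma part_len: "length (partition_of ms) = sum_list ms"
  by (induction ms rule: rev_induct) (simp_all add: part_snoc)

lemma part_set: "x \<in> set (partition_of ms) \<Longrightarrow> x < length ms"
  by (induction ms rule: rev_induct) (auto simp: part_snoc)

lemma part_cons: "partition_of (m # ms) = map Suc (partition_of ms) @ replicate m 0"
proof (induction ms rule: rev_induct)
  case Nil
  then show ?case using part_snoc[of "[]" m] by simp
next
  case (snoc x xs)
  then show ?case using part_snoc[of "m # xs" x] part_snoc[of xs x] by simp
qed

lemma part_rev: "dual_part (length ms) (partition_of ms) = partition_of (rev ms)"
proof (induction ms)
  case Nil
  then show ?case by (simp add: dual_part_def)
next
  case (Cons m ms)
  have "dual_part (length (m # ms)) (partition_of (m # ms))
     = replicate m (length ms) @ dual_part (length ms) (partition_of ms)"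
    by (simp add: dual_part_def part_cons rev_map comp_def)
  also have "\<dots> = partition_of (rev (m # ms))"
    using Cons by (simp add: part_snoc)
  finally show ?case .
qed

fun Gr :: "complex \<Rightarrow> complex \<Rightarrow> nat list \<Rightarrow> nat list \<Rightarrow> complex" where
  "Gr z \<beta> [a] [] = z ^ a"
| "Gr z \<beta> (a # b # mu) (c # lam) =
     (if b \<le> c \<and> c \<le> a then z ^ (a - c) * (if b = c then 1 else 1 + \<beta> * z) * Gr z \<beta> (b # mu) lam else 0)"
| "Gr z \<beta> _ _ = 0"

fun H :: "complex \<Rightarrow> complex \<Rightarrow> nat list \<Rightarrow> nat list \<Rightarrow> complex" where
  "H z \<beta> [] [] = 1"
| "H z \<beta> (a # mu) (c # lam) =
     (if a \<le> c \<and> (lam = [] \<or> hd lam \<le> a) then inverse z ^ (c - a) * (if a = c then 1 else 1 + \<beta> * z) * H z \<beta> mu lam else 0)"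
| "H z \<beta> _ _ = 0"

lemma GH:
  assumes "z \<noteq> 0"
  shows "length mu = length lam \<Longrightarrow>
    Gr z \<beta> (K # mu) lam = (if lam = [] \<or> hd lam \<le> K then z ^ K * H z \<beta> mu lam else 0)"
proof (induction lam arbitrary: K mu)
  case Nil
  then show ?case by simp
next
  case (Cons c lam)
  then obtain a mu' where mu: "mu = a # mu'" and len: "length mu' = length lam"
    by (cases mu) auto
  show ?case
  proof (cases "a \<le> c \<and> c \<le> K")
    case True
    have e: "z ^ (K - c) * z ^ a = z ^ K * inverse z ^ (c - a)"
    proof -
      have "z ^ (K - c) * z ^ a * z ^ (c - a) = z ^ K"
        using True by (simp flip: power_add)
      then show ?thesis using assms by (simp add: field_simps power_inverse)
    qed
    have "Gr z \<beta> (K # mu) (c # lam) = z ^ (K - c) * (if a = c then 1 else 1 + \<beta> * z) *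
        (if lam = [] \<or> hd lam \<le> a then z ^ a * H z \<beta> mu' lam else 0)"
      using True Cons.IH[OF len] by (simp add: mu)
    also have "\<dots> = (if c # lam = [] \<or> hd (c # lam) \<le> K then z ^ K * H z \<beta> mu (c # lam) else 0)"
      using True e by (auto simp: mu mult.commute simp flip: power_add)
    finally show ?thesis .
  next
    case False
    then show ?thesis by (auto simp: mu)
  qed
qed

lemma H_rep:
  "H z \<beta> (replicate n K @ mu) (replicate n K @ lam) =
     (if n = 0 \<or> lam = [] \<or> hd lam \<le> K then H z \<beta> mu lam else 0)"
proof (induction n)
  case 0
  then show ?case by simp
next
  case (Suc n)
  then show ?case by (cases n) auto
qed

lemma Gr_rep:
  "mu \<noteq> [] \<Longrightarrow> hd mu \<le> K \<Longrightarrow>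
   Gr z \<beta> (replicate n K @ mu) (replicate n K @ lam) =
     (if n = 0 \<or> hd mu = K then 1 else 1 + \<beta> * z) * Gr z \<beta> mu lam"
proof (induction n)
  case 0
  then show ?case by simp
next
  case (Suc n)
  show ?case
  proof (cases n)
    case 0
    then show ?thesis using Suc.prems by (cases mu) auto
  next
    case (Suc n')
    then show ?thesis using Suc.IH Suc.prems by simp
  qed
qed

lemma Gr_zero: "a < K \<Longrightarrow> Gr z \<beta> (a # r) (K # l) = 0"
  by (cases r) auto

lemma ball_shift: "(\<forall>j\<in>{1..Suc n}. P j) = (P 1 \<and> (\<forall>j\<in>{1..n}. P (Suc j)))"
proof
  assume "\<forall>j\<in>{1..Suc n}. P j"
  then show "P 1 \<and> (\<forall>j\<in>{1..n}. P (Suc j))" by auto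
next
  assume h: "P 1 \<and> (\<forall>j\<in>{1..n}. P (Suc j))"
  show "\<forall>j\<in>{1..Suc n}. P j"
  proof
    fix j assume j: "j \<in> {1..Suc n}"
    then obtain j' where jj: "j = Suc j'" by (cases j) auto
    show "P j"
    proof (cases "j' = 0")
      case True then show ?thesis using h jj by simp
    next
      case False then show ?thesis using h jj j by auto
    qed
  qed
qed

lemma G_skew_Gr:
  assumes z: "z \<noteq> 0"
  shows "length mu = length lam + 1 \<Longrightarrow> G_skew mu lam z \<beta> = Gr z \<beta> mu lam"
proof (induction lam arbitrary: mu)
  case Nil
  then obtain a where "mu = [a]" by (cases mu) auto
  then show ?case by (simp add: G_skew_def)
next
  case (Cons c l)
  then obtain a b m where mu: "mu = a # b # m" and len: "length (b # m) = length l + 1"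
    by (cases mu; cases "tl mu") auto
  define n where "n = length l"
  define P where "P = (\<lambda>j. (a # b # m) ! (j - 1) \<ge> (c # l) ! (j - 1) \<and> (c # l) ! (j - 1) \<ge> (a # b # m) ! j)"
  define P' where "P' = (\<lambda>j. (b # m) ! (j - 1) \<ge> l ! (j - 1) \<and> l ! (j - 1) \<ge> (b # m) ! j)"
  define g where "g = (\<lambda>j. 1 + \<beta> * z - \<beta> * z * (if (a # b # m) ! j = (c # l) ! (j - 1) then 1 else 0))"
  define g' where "g' = (\<lambda>j. 1 + \<beta> * z - \<beta> * z * (if (b # m) ! j = l ! (j - 1) then 1 else 0))"
  have PP: "\<forall>j\<in>{1..n}. P (Suc j) = P' j"
  proof
    fix j assume "j \<in> {1..n}"
    then obtain j' where "j = Suc j'" by (cases j) auto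
    then show "P (Suc j) = P' j" by (simp add: P_def P'_def)
  qed
  have gg: "\<forall>j\<in>{1..n}. g (Suc j) = g' j"
  proof
    fix j assume "j \<in> {1..n}"
    then obtain j' where "j = Suc j'" by (cases j) auto
    then show "g (Suc j) = g' j" by (simp add: g_def g'_def)
  qed
  have c1: "(\<forall>j\<in>{1..Suc n}. P j) = (P 1 \<and> (\<forall>j\<in>{1..n}. P' j))"
    unfolding ball_shift using PP by auto
  have p1: "(\<Prod>j=1..Suc n. g j) = g 1 * (\<Prod>j=1..n. g' j)"
  proof -
    have "(\<Prod>j=1..Suc n. g j) = g 1 * (\<Prod>j=Suc 1..Suc n. g j)"
      by (rule prod.atLeast_Suc_atMost) simp
    also have "\<dots> = g 1 * (\<Prod>j=1..n. g (Suc j))"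
      by (simp only: prod.atLeast_Suc_atMost_Suc_shift comp_def)
    also have "(\<Prod>j=1..n. g (Suc j)) = (\<Prod>j=1..n. g' j)"
      by (rule prod.cong) (use gg in auto)
    finally show ?thesis .
  qed
  have IH: "G_skew (b # m) l z \<beta> = Gr z \<beta> (b # m) l" using Cons.IH len by simp
  have sums: "int (sum_list (a # b # m)) - int (sum_list (c # l)) =
      int (a - c) + (int (sum_list (b # m)) - int (sum_list l))" if "c \<le> a"
    using that by simp
  have G0: "G_skew mu (c # l) z \<beta> = (if \<forall>j\<in>{1..length (c # l)}. P j then
      z powi (int (sum_list (a # b # m)) - int (sum_list (c # l))) * (\<Prod>j=1..length (c # l). g j) else 0)"
    unfolding G_skew_def mu P_def g_def by (rule refl)
  have ln: "length (c # l) = Suc n" by (simp add: n_def)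
  show ?case
  proof (cases "P 1")
    case True
    then have ca: "b \<le> c" "c \<le> a" by (auto simp: P_def)
    have "G_skew mu (c # l) z \<beta> = (if (\<forall>j\<in>{1..n}. P' j) then z powi (int (sum_list (a # b # m)) - int (sum_list (c # l))) *
        (g 1 * (\<Prod>j=1..n. g' j)) else 0)"
      unfolding G0 ln c1 p1 using True by simp
    also have "\<dots> = z ^ (a - c) * g 1 * G_skew (b # m) l z \<beta>"
    proof -
      have G': "G_skew (b # m) l z \<beta> = (if (\<forall>j\<in>{1..n}. P' j) then z powi (int (sum_list (b # m)) - int (sum_list l)) *
        (\<Prod>j=1..n. g' j) else 0)"
        unfolding G_skew_def P'_def g'_def n_def by (rule refl)
      have pw: "z powi (int (sum_list (a # b # m)) - int (sum_list (c # l))) =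
          z ^ (a - c) * z powi (int (sum_list (b # m)) - int (sum_list l))"
        unfolding sums[OF ca(2)] using z by (simp add: power_int_add)
      show ?thesis unfolding G' pw by simp
    qed
    also have "\<dots> = Gr z \<beta> mu (c # l)"
      using ca IH by (simp add: mu g_def)
    finally show ?thesis .
  next
    case False
    then have "\<not> (b \<le> c \<and> c \<le> a)" by (auto simp: P_def)
    moreover have "G_skew mu (c # l) z \<beta> = 0"
      unfolding G0 ln c1 using False by simp
    ultimately show ?thesis by (auto simp: mu)
  qed
qed

lemma H_zero1: "a < K \<Longrightarrow> H z \<beta> (a # r) (K # K # l) = 0"
  by simp

lemma H_zero2: "(\<forall>c\<in>set l. c < K) \<Longrightarrow> H z \<beta> (K # r) l = 0"
  by (cases l) auto

lemma rep2: "n + 2 \<le> m \<Longrightarrow> replicate m K @ xs = replicate n K @ (K # K # (replicate (m - n - 2) K @ xs))"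
proof -
  assume h: "n + 2 \<le> m"
  have m: "m = n + Suc (Suc (m - n - 2))" using h by simp
  show ?thesis by (subst (1) m) (simp only: replicate_add replicate_Suc append_assoc append_Cons)
qed

lemma rep1: "n < m \<Longrightarrow> replicate m K @ xs = replicate n K @ (K # (replicate (m - n - 1) K @ xs))"
proof -
  assume h: "n < m"
  have m: "m = n + Suc (m - n - 1)" using h by simp
  show ?thesis by (subst (1) m) (simp only: replicate_add replicate_Suc append_assoc append_Cons)
qed

lemma main_ind:
  fixes x z \<beta> v :: complex
  assumes hx: "x \<noteq> 0" and hz: "z \<noteq> 0"
    and e00: "inverse v - \<beta> * v = x"
    and e1: "v * inverse x = z"
    and e2: "inverse v * inverse x = 1 + \<beta> * z"
    and e3: "inverse x ^ 2 = z * (1 + \<beta> * z)"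
  shows "length ms = K \<Longrightarrow> length ns = K \<Longrightarrow>
    (sum_list ms = sum_list ns + 1 \<longrightarrow>
       x powi (1 - int K) * mono_me \<beta> v ms ns K 0 1 = Gr z \<beta> (partition_of ms) (partition_of ns)) \<and>
    (sum_list ms = sum_list ns \<longrightarrow>
       x powi (- int K) * mono_me \<beta> v ms ns K 1 1 = z ^ K * H z \<beta> (partition_of ms) (partition_of ns))"
proof (induction ms arbitrary: K ns rule: rev_induct)
  case Nil
  then show ?case by simp
next
  case (snoc m ms)
  define K' where "K' = length ms"
  have KK: "K = Suc K'" using snoc.prems by (simp add: K'_def)
  obtain ns' n where ns: "ns = ns' @ [n]"
    using snoc.prems KK by (cases ns rule: rev_exhaust) auto
  have lns': "length ns' = K'" using snoc.prems ns KK by simp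
  define mu where "mu = partition_of ms"
  define la where "la = partition_of ns'"
  have mu_len: "length mu = sum_list ms" by (simp add: mu_def part_len)
  have la_len: "length la = sum_list ns'" by (simp add: la_def part_len)
  have mu_lt: "\<forall>c\<in>set mu. c < K'" using part_set by (auto simp: mu_def K'_def)
  have la_lt: "\<forall>c\<in>set la. c < K'" using part_set lns' by (fastforce simp: la_def)
  define M0 where "M0 = mono_me \<beta> v ms ns' K' 0 1"
  define M1 where "M1 = mono_me \<beta> v ms ns' K' 1 1"
  have IH: "(sum_list ms = sum_list ns' + 1 \<longrightarrow> x powi (1 - int K') * M0 = Gr z \<beta> mu la) \<and>
      (sum_list ms = sum_list ns' \<longrightarrow> x powi (- int K') * M1 = z ^ K' * H z \<beta> mu la)"
    using snoc.IH[of K' ns'] lns' by (simp add: K'_def M0_def M1_def mu_def la_def)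
  have mexp: "mono_me \<beta> v (ms @ [m]) (ns' @ [n]) (Suc K') a 1 =
      L_me \<beta> v a 0 m n * M0 + L_me \<beta> v a 1 m n * M1" for a
    using lns' by (simp add: mono_append nth_append K'_def M0_def M1_def)
  have L00: "L_me \<beta> v 0 0 m n = (if m = n then (if n = 0 then x else inverse v) else 0)"
    using e00 by (simp add: L_me_def id_me_def pi_me_def)
  have L01: "L_me \<beta> v 0 1 m n = (if m = n + 1 then 1 else 0)"
    by (simp add: L_me_def phid_me_def)
  have L10: "L_me \<beta> v 1 0 m n = (if n = m + 1 then 1 else 0)"
    by (simp add: L_me_def phi_me_def)
  have L11: "L_me \<beta> v 1 1 m n = (if m = n then v else 0)"
    by (simp add: L_me_def id_me_def)
  have pK: "x powi (- int K') = x powi (1 - int K') * inverse x"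
    using power_int_add[of x "1 - int K'" "-1"] hx by (simp add: power_int_minus)
  have pS: "x powi (1 - int (Suc K')) = x powi (- int K')" by simp
  have pS2: "x powi (- int (Suc K')) = x powi (- int K') * inverse x"
  proof -
    have "- int (Suc K') = - int K' + -1" by simp
    then show ?thesis using power_int_add[of x "- int K'" "-1"] hx by (simp only:) (simp add: power_int_minus)
  qed
  have pms: "partition_of (ms @ [m]) = replicate m K' @ mu" by (simp add: part_snoc mu_def K'_def)
  have pns: "partition_of ns = replicate n K' @ la" by (simp add: ns part_snoc la_def lns')
  show ?case
  proof (intro conjI impI)
    assume sm: "sum_list (ms @ [m]) = sum_list ns + 1"
    then have sm': "sum_list ms + m = sum_list ns' + n + 1" by (simp add: ns)
    show "x powi (1 - int K) * mono_me \<beta> v (ms @ [m]) ns K 0 1 =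
        Gr z \<beta> (partition_of (ms @ [m])) (partition_of ns)"
    proof -
      have lhs: "x powi (1 - int K) * mono_me \<beta> v (ms @ [m]) ns K 0 1 =
          x powi (- int K') * (L_me \<beta> v 0 0 m n * M0 + L_me \<beta> v 0 1 m n * M1)"
        unfolding KK ns mexp pS ..
      consider "m = n" | "m = n + 1" | "n + 2 \<le> m" | "m < n" by linarith
      then show ?thesis
      proof cases
        case 1
        then have s0: "sum_list ms = sum_list ns' + 1" using sm' by simp
        then obtain a mu'' where mu: "mu = a # mu''" using mu_len by (cases mu) auto
        have aK: "a < K'" using mu_lt mu by simp
        have "Gr z \<beta> (replicate n K' @ mu) (replicate n K' @ la) =
            (if n = 0 then 1 else 1 + \<beta> * z) * Gr z \<beta> mu la"
          using Gr_rep[of mu K' z \<beta> n la] aK by (simp add: mu)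
        moreover have "x powi (- int K') * (L_me \<beta> v 0 0 m n * M0 + L_me \<beta> v 0 1 m n * M1)
            = (if n = 0 then 1 else 1 + \<beta> * z) * (x powi (1 - int K') * M0)"
        proof -
          have c: "inverse x * L_me \<beta> v 0 0 m n = (if n = 0 then 1 else 1 + \<beta> * z)"
            using L00 1 hx e2 by (simp add: mult.commute)
          have "x powi (- int K') * (L_me \<beta> v 0 0 m n * M0 + L_me \<beta> v 0 1 m n * M1)
            = (inverse x * L_me \<beta> v 0 0 m n) * (x powi (1 - int K') * M0)"
            unfolding pK L01 using 1 by (simp add: ac_simps)
          then show ?thesis unfolding c .
        qed
        ultimately show ?thesis unfolding lhs pms pns using IH s0 1 by simp
      next
        case 2
        then have s1: "sum_list ms = sum_list ns'" using sm' by simp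
        have cond: "replicate n K' @ la = [] \<or> hd (replicate n K' @ la) \<le> K'"
          using la_lt by (cases n; cases la) auto
        have "Gr z \<beta> (replicate m K' @ mu) (replicate n K' @ la) =
            Gr z \<beta> (K' # (replicate n K' @ mu)) (replicate n K' @ la)"
          using 2 by simp
        also have "\<dots> = z ^ K' * H z \<beta> (replicate n K' @ mu) (replicate n K' @ la)"
          using GH[OF hz, of "replicate n K' @ mu" "replicate n K' @ la" \<beta> K'] cond s1 mu_len la_len
          by simp
        also have "\<dots> = z ^ K' * H z \<beta> mu la"
          using H_rep[of z \<beta> n K' mu la] la_lt by (cases la) auto
        finally have r: "Gr z \<beta> (replicate m K' @ mu) (replicate n K' @ la) = z ^ K' * H z \<beta> mu la" .
        have "x powi (- int K') * (L_me \<beta> v 0 0 m n * M0 + L_me \<beta> v 0 1 m n * M1)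
            = x powi (- int K') * M1"
          unfolding L00 L01 using 2 by simp
        then show ?thesis unfolding lhs pms pns r using IH s1 by simp
      next
        case 3
        then have "sum_list ns' \<ge> 1" using sm' by linarith
        then have la_ne: "la \<noteq> []" using la_len by (metis list.size(3) not_one_le_zero)
        then obtain c l where la: "la = c # l" by (cases la) auto
        have cK: "c < K'" using la_lt la by simp
        have rep: "replicate m K' @ mu = replicate n K' @ (K' # K' # (replicate (m - n - 2) K' @ mu))"
          using 3 by (rule rep2)
        have "Gr z \<beta> (replicate m K' @ mu) (replicate n K' @ la) = 0"
          unfolding rep using Gr_rep[of "K' # K' # (replicate (m - n - 2) K' @ mu)" K' z \<beta> n la] cK
          by (simp add: la)
        moreover have "L_me \<beta> v 0 0 m n = 0" "L_me \<beta> v 0 1 m n = 0" unfolding L00 L01 using 3 by auto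
        ultimately show ?thesis unfolding lhs pms pns by simp
      next
        case 4
        then have "length mu \<ge> 1" using mu_len sm' by linarith
        then obtain a mu'' where mu: "mu = a # mu''" by (cases mu) auto
        have aK: "a < K'" using mu_lt mu by simp
        have rep: "replicate n K' @ la = replicate m K' @ (K' # (replicate (n - m - 1) K' @ la))"
          using 4 by (rule rep1)
        have "Gr z \<beta> (replicate m K' @ mu) (replicate n K' @ la) = 0"
          unfolding rep using Gr_rep[of mu K' z \<beta> m "K' # (replicate (n - m - 1) K' @ la)"] aK Gr_zero[OF aK]
          by (simp add: mu)
        moreover have "L_me \<beta> v 0 0 m n = 0" "L_me \<beta> v 0 1 m n = 0" unfolding L00 L01 using 4 by auto
        ultimately show ?thesis unfolding lhs pms pns by simp
      qed
    qed
  next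
    assume sm: "sum_list (ms @ [m]) = sum_list ns"
    then have sm': "sum_list ms + m = sum_list ns' + n" by (simp add: ns)
    show "x powi (- int K) * mono_me \<beta> v (ms @ [m]) ns K 1 1 =
        z ^ K * H z \<beta> (partition_of (ms @ [m])) (partition_of ns)"
    proof -
      have lhs: "x powi (- int K) * mono_me \<beta> v (ms @ [m]) ns K 1 1 =
          x powi (- int K') * inverse x * (L_me \<beta> v 1 0 m n * M0 + L_me \<beta> v 1 1 m n * M1)"
        unfolding KK ns mexp pS2 ..
      consider "m = n" | "n = m + 1" | "m + 2 \<le> n" | "n < m" by linarith
      then show ?thesis
      proof cases
        case 1
        then have s1: "sum_list ms = sum_list ns'" using sm' by simp
        have r: "H z \<beta> (replicate m K' @ mu) (replicate n K' @ la) = H z \<beta> mu la"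
          using H_rep[of z \<beta> n K' mu la] la_lt 1 by (cases la) auto
        have "x powi (- int K') * inverse x * (L_me \<beta> v 1 0 m n * M0 + L_me \<beta> v 1 1 m n * M1)
            = (v * inverse x) * (x powi (- int K') * M1)"
          unfolding L10 L11 using 1 by simp
        then show ?thesis unfolding lhs pms pns r using IH s1 e1 KK by (simp add: mult.assoc)
      next
        case 2
        then have s0: "sum_list ms = sum_list ns' + 1" using sm' by simp
        then obtain a mu'' where mu: "mu = a # mu''" using mu_len by (cases mu) auto
        have aK: "a < K'" using mu_lt mu by simp
        have lmu: "length mu'' = length la" using mu_len la_len s0 mu by simp
        have r: "H z \<beta> (replicate m K' @ mu) (replicate n K' @ la) = H z \<beta> (a # mu'') (K' # la)"
        proof -
          have rr: "replicate n K' @ la = replicate m K' @ (K' # la)"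
            using 2 by (simp add: replicate_app_Cons_same)
          show ?thesis unfolding rr mu using H_rep[of z \<beta> m K' "a # mu''" "K' # la"] by simp
        qed
        have g: "Gr z \<beta> mu la = (if la = [] \<or> hd la \<le> a then z ^ a * H z \<beta> mu'' la else 0)"
          using GH[OF hz lmu, of \<beta> a] by (simp add: mu)
        have zz: "z ^ Suc K' * inverse z ^ (K' - a) = z * z ^ a"
        proof -
          have "z ^ Suc K' = z * z ^ a * z ^ (K' - a)" using aK by (simp flip: power_add)
          then show ?thesis using hz by (simp add: power_inverse field_simps)
        qed
        have "x powi (- int K') * inverse x * (L_me \<beta> v 1 0 m n * M0 + L_me \<beta> v 1 1 m n * M1)
            = inverse x ^ 2 * (x powi (1 - int K') * M0)"
          unfolding L10 L11 pK using 2 by (simp add: power2_eq_square)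
        also have "\<dots> = z * (1 + \<beta> * z) * Gr z \<beta> mu la" using IH s0 e3 by simp
        also have "\<dots> = z ^ Suc K' * H z \<beta> (a # mu'') (K' # la)"
          unfolding g using aK zz
          by (auto simp: mult_ac)
        finally show ?thesis unfolding lhs pms pns r using KK by simp
      next
        case 3
        then have "length mu \<ge> 1" using mu_len sm' by linarith
        then obtain a mu'' where mu: "mu = a # mu''" by (cases mu) auto
        have aK: "a < K'" using mu_lt mu by simp
        have rep: "replicate n K' @ la = replicate m K' @ (K' # K' # (replicate (n - m - 2) K' @ la))"
          using 3 by (rule rep2)
        have "H z \<beta> (replicate m K' @ mu) (replicate n K' @ la) = 0"
          unfolding rep using H_rep[of z \<beta> m K' mu "K' # K' # (replicate (n - m - 2) K' @ la)"] aK
          by (simp add: mu)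
        moreover have "L_me \<beta> v 1 0 m n = 0" "L_me \<beta> v 1 1 m n = 0" unfolding L10 L11 using 3 by auto
        ultimately show ?thesis unfolding lhs pms pns by simp
      next
        case 4
        have rep: "replicate m K' @ mu = replicate n K' @ (K' # (replicate (m - n - 1) K' @ mu))"
          using 4 by (rule rep1)
        have "H z \<beta> (replicate m K' @ mu) (replicate n K' @ la) = 0"
          unfolding rep using H_rep[of z \<beta> n K' "K' # (replicate (m - n - 1) K' @ mu)" la]
            H_zero2[OF la_lt] by simp
        moreover have "L_me \<beta> v 1 0 m n = 0" "L_me \<beta> v 1 1 m n = 0" unfolding L10 L11 using 4 by auto
        ultimately show ?thesis unfolding lhs pms pns by simp
      qed
    qed
  qed
qed

theorem mainTheorem7:
  fixes \<beta> v :: complex and M N :: nat and ms ns :: "nat list"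
  assumes "M \<ge> 1"
    and "length ms = M" and "length ns = M"
    and "sum_list ms = N + 1" and "sum_list ns = N"
    and "v \<noteq> 0" and "inverse v ^ 2 \<noteq> \<beta>"
  shows "(inverse v - \<beta> * v) powi (1 - int M) * B_me \<beta> v ms ns
           = G_skew (partition_of ms) (partition_of ns) (inverse (inverse v ^ 2 - \<beta>)) \<beta>
       \<and> (inverse v - \<beta> * v) powi (1 - int M) * C_me \<beta> v ns ms
           = G_skew (dual_part M (partition_of ms)) (dual_part M (partition_of ns))
               (inverse (inverse v ^ 2 - \<beta>)) \<beta>"
proof -
  define w where "w = inverse v ^ 2 - \<beta>"
  define x where "x = inverse v - \<beta> * v"
  define z where "z = inverse w"
  have hw: "w \<noteq> 0" using assms(7) by (simp add: w_def)
  have xw: "x = v * w" using assms(6) by (simp add: x_def w_def field_simps power2_eq_square)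
  have hx: "x \<noteq> 0" using hw assms(6) xw by simp
  have hz: "z \<noteq> 0" using hw by (simp add: z_def)
  have e1: "v * inverse x = z" using assms(6) hw by (simp add: xw z_def field_simps)
  have e2: "inverse v * inverse x = 1 + \<beta> * z"
    using assms(6) hw by (simp add: xw z_def w_def field_simps power2_eq_square)
  have e3: "inverse x ^ 2 = z * (1 + \<beta> * z)"
  proof -
    have "inverse x ^ 2 = (v * inverse x) * (inverse v * inverse x)"
      using assms(6) by (simp add: power2_eq_square field_simps)
    then show ?thesis unfolding e1 e2 .
  qed
  note MI = main_ind[OF hx hz x_def[symmetric] e1 e2 e3]
  have B: "x powi (1 - int M) * B_me \<beta> v ms ns = G_skew (partition_of ms) (partition_of ns) z \<beta>"
  proof -
    have "x powi (1 - int M) * B_me \<beta> v ms ns = Gr z \<beta> (partition_of ms) (partition_of ns)"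
      using MI[of ms M ns] assms by (simp add: B_me_def)
    then show ?thesis using G_skew_Gr[OF hz] assms by (simp add: part_len)
  qed
  have C: "x powi (1 - int M) * C_me \<beta> v ns ms =
      G_skew (partition_of (rev ms)) (partition_of (rev ns)) z \<beta>"
  proof -
    have "x powi (1 - int M) * C_me \<beta> v ns ms = Gr z \<beta> (partition_of (rev ms)) (partition_of (rev ns))"
      using MI[of "rev ms" M "rev ns"] assms by (simp add: C_B B_me_def)
    then show ?thesis using G_skew_Gr[OF hz] assms by (simp add: part_len)
  qed
  have d1: "dual_part M (partition_of ms) = partition_of (rev ms)" using part_rev assms(2) by blast
  have d2: "dual_part M (partition_of ns) = partition_of (rev ns)" using part_rev assms(3) by blast
  show ?thesis using B C unfolding d1 d2 x_def z_def w_def by simp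
qed

end
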